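(* For every integer $n\ge 0$, \[ \left(\frac23\right)^n p_n\!\left(\frac14\right) = \sum_{k=0}^n B_{n-k}^{(-k)}. \]
   Context: Define polynomial sequences $(p_k(x))_{k\ge -1}$ and $(q_k(x))_{k\ge -1}$ by $p_{-1}(x)=0$, $q_{-1}(x)=1$ and, for $k\ge -1$, $p_{k+1}(x) = 2(kx+1)p_k(x) + 2x(1-x)p_k'(x) + q_k(x)$, $q_{k+1}(x) = (2(k+1)x+1)q_k(x) + 2x(1-x)q_k'(x)$. For an integer $k$, $\mathrm{Li}_k(z)=\sum_{m\ge1} z^m/m^k$. The poly-Bernoulli numbers $B_n^{(k)}\in\mathbb{Q}$ are defined by $\sum_{n\ge0} B_n^{(k)} \frac{t^n}{n!} = \frac{\mathrm{Li}_k(1-e^{-t})}{1-e^{-t}}$. *)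

theory Defs
  imports "HOL-Computational_Algebra.Computational_Algebra"
begin

text \<open>The pair (p_{m-1}, q_{m-1}) is stored at index m, so index 0 holds (p_{-1}, q_{-1}) = (0, 1).
  The step from index m to m+1 uses k = m - 1 (an integer, k \<ge> -1).\<close>
fun pq_seq :: "nat \<Rightarrow> rat poly \<times> rat poly" where
  "pq_seq 0 = (0, 1)"
| "pq_seq (Suc m) =
     (let k = (of_int (int m - 1) :: rat); p = fst (pq_seq m); q = snd (pq_seq m) in
      (smult 2 ([:1, k:] * p) + [:0, 2, -2:] * pderiv p + q,
       [:1, 2 * (k + 1):] * q + [:0, 2, -2:] * pderiv q))"

definition p_poly :: "int \<Rightarrow> rat poly" where
  "p_poly k = fst (pq_seq (nat (k + 1)))"

definition q_poly :: "int \<Rightarrow> rat poly" where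
  "q_poly k = snd (pq_seq (nat (k + 1)))"

definition Li_fps :: "int \<Rightarrow> rat fps" where
  "Li_fps k = Abs_fps (\<lambda>m. if m = 0 then 0 else 1 / ((of_nat m :: rat) powi k))"

definition polyB_gf :: "int \<Rightarrow> rat fps" where
  "polyB_gf k = fps_compose (Li_fps k) (1 - fps_exp (-1)) / (1 - fps_exp (-1))"

definition polyB :: "nat \<Rightarrow> int \<Rightarrow> rat" where
  "polyB n k = fact n * fps_nth (polyB_gf k) n"

end

theory Submission
  imports Defs
begin


definition Wp :: "rat poly" where "Wp = [:0, 2, -2:]"
definition Eop :: "rat \<Rightarrow> rat poly \<Rightarrow> rat poly" where
  "Eop c f = [:1, 2*c:] * f + Wp * pderiv f"
definition Aq :: "nat \<Rightarrow> rat poly" where "Aq i = snd (pq_seq i)"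
definition Pp :: "nat \<Rightarrow> rat poly" where "Pp i = fst (pq_seq i)"

lemma Aq_0: "Aq 0 = 1" by (simp add: Aq_def)
lemma Pp_0: "Pp 0 = 0" by (simp add: Pp_def)

lemma Aq_Suc: "Aq (Suc m) = Eop (of_nat m) (Aq m)"
  by (simp add: Aq_def Eop_def Wp_def Let_def)

lemma Pp_Suc: "Pp (Suc m) = smult 2 ([:1, of_int (int m - 1):] * Pp m) + Wp * pderiv (Pp m) + Aq m"
  by (simp add: Aq_def Pp_def Wp_def Let_def)

lemma Aq_1: "Aq 1 = 1" by (simp add: Aq_Suc Aq_0 Eop_def)

lemma Eop_add: "Eop c (f + g) = Eop c f + Eop c g"
  by (simp add: Eop_def pderiv_add algebra_simps smult_add_right smult_add_left)
lemma Eop_diff: "Eop c (f - g) = Eop c f - Eop c g"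
  by (simp add: Eop_def pderiv_diff algebra_simps smult_diff_right)
lemma Eop_0: "Eop c 0 = 0" by (simp add: Eop_def)
lemma Eop_sum: "Eop c (\<Sum>i\<in>S. f i) = (\<Sum>i\<in>S. Eop c (f i))"
  by (induction S rule: infinite_finite_induct) (auto simp: Eop_0 Eop_add)
lemma Eop_ofnat: "Eop c (of_nat k * f) = of_nat k * Eop c f"
  by (simp add: Eop_def pderiv_mult algebra_simps smult_add_right smult_add_left smult_diff_right smult_add_left)

lemma Eop_mult: "Eop (c + d) (f * g) = Eop c f * g + f * Eop d g - f * g"
proof -
  have "[:1, 2*(c+d):] = [:1, 2*c:] + [:1, 2*d:] - 1" by (simp add: one_pCons algebra_simps)
  then show ?thesis by (simp add: Eop_def pderiv_mult algebra_simps smult_add_right smult_add_left smult_diff_right smult_add_left)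
qed

lemma smult2: "smult (2::rat) p = p + p"
  by (metis one_add_one smult_add_left smult_1_left)

lemma Pstep: "smult 2 ([:1, c + d:] * (f * g)) + Wp * pderiv (f * g) = Eop c f * g + f * Eop d g"
proof -
  have "smult 2 [:1, c+d:] = [:1, 2*c:] + [:1, 2*d:]" by (simp add: algebra_simps)
  then have "smult 2 ([:1, c + d:] * (f * g)) = ([:1, 2*c:] + [:1, 2*d:]) * (f*g)"
    by (metis mult_smult_left)
  then show ?thesis by (simp add: Eop_def pderiv_mult algebra_simps smult_add_right smult_add_left smult_diff_right smult_add_left smult2)
qed

definition Lop :: "nat \<Rightarrow> rat poly \<Rightarrow> rat poly" where
  "Lop n h = smult 2 ([:1, of_nat n:] * h) + Wp * pderiv h"

lemma Lop_add: "Lop n (f + g) = Lop n f + Lop n g"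
  by (simp add: Lop_def pderiv_add algebra_simps smult_add_right)
lemma Lop_0: "Lop n 0 = 0" by (simp add: Lop_def)
lemma Lop_sum: "Lop n (\<Sum>i\<in>S. f i) = (\<Sum>i\<in>S. Lop n (f i))"
  by (induction S rule: infinite_finite_induct) (simp_all add: Lop_add Lop_0)
lemma Lop_ofnat: "Lop n (of_nat k * f) = of_nat k * Lop n f"
  by (simp add: Lop_def pderiv_mult algebra_simps)

lemma Lop_prod: "i \<le> n \<Longrightarrow> Lop n (Aq i * Aq (n - i)) = Aq (Suc i) * Aq (n - i) + Aq i * Aq (Suc (n - i))"
proof -
  assume "i \<le> n"
  then have "(of_nat n :: rat) = of_nat i + of_nat (n - i)" by simp
  then have "Lop n (Aq i * Aq (n - i)) = smult 2 ([:1, of_nat i + of_nat (n-i):] * (Aq i * Aq (n-i))) + Wp * pderiv (Aq i * Aq (n-i))"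
    unfolding Lop_def by (simp only:)
  then show ?thesis by (simp only: Pstep Aq_Suc[symmetric])
qed

lemma Pp_closed: "Pp (Suc n) = (\<Sum>i\<le>n. of_nat (Suc n choose Suc i) * (Aq i * Aq (n - i)))"
proof (induction n)
  case 0
  then show ?case by (simp add: Pp_Suc Pp_0 Aq_0)
next
  case (Suc n)
  have k: "(of_int (int (Suc n) - 1) :: rat) = of_nat n" by simp
  have "Pp (Suc (Suc n)) = Lop n (Pp (Suc n)) + Aq (Suc n)"
    unfolding Pp_Suc[of "Suc n"] k Lop_def by simp
  also have "Lop n (Pp (Suc n)) = (\<Sum>i\<le>n. of_nat (Suc n choose Suc i) * (Aq (Suc i) * Aq (n - i) + Aq i * Aq (Suc (n - i))))"
    unfolding Suc.IH Lop_sum Lop_ofnat by (intro sum.cong refl) (simp add: Lop_prod)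
  finally have 1: "Pp (Suc (Suc n)) = (\<Sum>i\<le>n. of_nat (Suc n choose Suc i) * (Aq (Suc i) * Aq (n - i)))
     + (\<Sum>i\<le>n. of_nat (Suc n choose Suc i) * (Aq i * Aq (Suc n - i))) + Aq (Suc n)"
    by (simp add: distrib_left sum.distrib Suc_diff_le)
  have 2: "(\<Sum>i\<le>Suc n. of_nat (Suc (Suc n) choose Suc i) * (Aq i * Aq (Suc n - i)))
     = (\<Sum>i\<le>Suc n. of_nat (Suc n choose i) * (Aq i * Aq (Suc n - i)))
     + (\<Sum>i\<le>Suc n. of_nat (Suc n choose Suc i) * (Aq i * Aq (Suc n - i)))"
    by (simp only: binomial_Suc_Suc of_nat_add distrib_right sum.distrib)
  have 3: "(\<Sum>i\<le>Suc n. of_nat (Suc n choose i) * (Aq i * Aq (Suc n - i)))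
     = Aq (Suc n) + (\<Sum>i\<le>n. of_nat (Suc n choose Suc i) * (Aq (Suc i) * Aq (n - i)))"
    by (subst sum.atMost_Suc_shift) (simp only: binomial_n_0 Aq_0 diff_zero diff_Suc_Suc of_nat_1 mult_1 mult_1_right)
  have 4: "(\<Sum>i\<le>Suc n. of_nat (Suc n choose Suc i) * (Aq i * Aq (Suc n - i)))
     = (\<Sum>i\<le>n. of_nat (Suc n choose Suc i) * (Aq i * Aq (Suc n - i)))"
    by (simp add: binomial_eq_0)
  show ?case unfolding 1 2 3 4 by (simp only: add_ac)
qed

definition fx :: "nat \<Rightarrow> rat poly" where "fx m = [:0, 1:] * [:2, -2:] ^ m"

lemma fx_Suc: "fx (Suc m) = [:2, -2:] * fx m" by (simp add: fx_def algebra_simps)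

lemma Eop_fx: "Eop (of_nat m) (fx m) = [:3, -2:] * fx m"
proof (induction m)
  case 0
  then show ?case by (simp add: Eop_def fx_def Wp_def pderiv_pCons)
next
  case (Suc m)
  have e1: "Eop 1 [:2, -2:] = [:2, -2:]" by (simp add: Eop_def Wp_def pderiv_pCons)
  have "Eop (of_nat (Suc m)) (fx (Suc m)) = Eop (1 + of_nat m) ([:2, -2:] * fx m)"
    by (simp add: fx_Suc)
  also have "\<dots> = [:2, -2:] * fx m + [:2, -2:] * ([:3, -2:] * fx m) - [:2, -2:] * fx m"
    unfolding Eop_mult e1 Suc.IH ..
  also have "\<dots> = [:3, -2:] * fx (Suc m)" by (simp add: fx_Suc algebra_simps)
  finally show ?case .
qed

definition Diff :: "nat \<Rightarrow> rat poly" where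
  "Diff i = Aq (Suc i) - [:1, -1:] * Aq i - (\<Sum>j\<le>i. of_nat (i choose j) * (fx (i - j) * Aq (Suc j)))"

lemma T2: "Eop (of_nat (Suc i)) ([:1, -1:] * Aq i) = [:1, -1:] * Aq (Suc i)"
proof -
  have e1: "Eop 1 [:1, -1:] = [:1, -1:]" by (simp add: Eop_def Wp_def pderiv_pCons)
  have "Eop (of_nat (Suc i)) ([:1, -1:] * Aq i) = Eop (1 + of_nat i) ([:1, -1:] * Aq i)" by simp
  also have "\<dots> = [:1, -1:] * Aq i + [:1, -1:] * Aq (Suc i) - [:1, -1:] * Aq i"
    unfolding Eop_mult e1 Aq_Suc ..
  finally show ?thesis by simp
qed

lemma smult3: "smult (3::rat) p = p + smult 2 p"
proof -
  have "(3::rat) = 1 + 2" by simp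
  then show ?thesis by (metis smult_add_left smult_1_left)
qed

lemma T3: "j \<le> i \<Longrightarrow> Eop (of_nat (Suc i)) (fx (i - j) * Aq (Suc j)) = fx (i - j) * Aq (Suc (Suc j)) + fx (Suc (i - j)) * Aq (Suc j)"
proof -
  assume "j \<le> i"
  then have "(of_nat (Suc i) :: rat) = of_nat (i - j) + of_nat (Suc j)" by simp
  then have "Eop (of_nat (Suc i)) (fx (i - j) * Aq (Suc j)) = Eop (of_nat (i - j) + of_nat (Suc j)) (fx (i - j) * Aq (Suc j))"
    by (simp only:)
  also have "\<dots> = [:3, -2:] * fx (i - j) * Aq (Suc j) + fx (i - j) * Aq (Suc (Suc j)) - fx (i - j) * Aq (Suc j)"
    unfolding Eop_mult Eop_fx Aq_Suc[of "Suc j"] by simp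
  also have "\<dots> = fx (i - j) * Aq (Suc (Suc j)) + fx (Suc (i - j)) * Aq (Suc j)"
    by (simp add: fx_Suc algebra_simps smult3)
  finally show ?thesis .
qed

lemma Diff_Suc: "Diff (Suc i) = Eop (of_nat (Suc i)) (Diff i)"
proof -
  have S: "Eop (of_nat (Suc i)) (\<Sum>j\<le>i. of_nat (i choose j) * (fx (i - j) * Aq (Suc j)))
     = (\<Sum>j\<le>i. of_nat (i choose j) * (fx (i - j) * Aq (Suc (Suc j)))) + (\<Sum>j\<le>i. of_nat (i choose j) * (fx (Suc i - j) * Aq (Suc j)))"
    unfolding Eop_sum Eop_ofnat sum.distrib[symmetric]
  proof (intro sum.cong refl)
    fix j assume "j \<in> {..i}"
    then have j: "j \<le> i" by simp
    show "of_nat (i choose j) * Eop (of_nat (Suc i)) (fx (i - j) * Aq (Suc j)) =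
      of_nat (i choose j) * (fx (i - j) * Aq (Suc (Suc j))) + of_nat (i choose j) * (fx (Suc i - j) * Aq (Suc j))"
      unfolding T3[OF j] Suc_diff_le[OF j] by (simp only: distrib_left)
  qed
  have P: "(\<Sum>j\<le>Suc i. of_nat (Suc i choose j) * (fx (Suc i - j) * Aq (Suc j)))
     = (\<Sum>j\<le>i. of_nat (i choose j) * (fx (i - j) * Aq (Suc (Suc j)))) + (\<Sum>j\<le>i. of_nat (i choose j) * (fx (Suc i - j) * Aq (Suc j)))"
  proof -
    have a: "(\<Sum>j\<le>Suc i. of_nat (Suc i choose j) * (fx (Suc i - j) * Aq (Suc j)))
      = fx (Suc i) * Aq 1 + (\<Sum>j\<le>i. of_nat (i choose j) * (fx (i - j) * Aq (Suc (Suc j))))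
        + (\<Sum>j\<le>i. of_nat (i choose Suc j) * (fx (i - j) * Aq (Suc (Suc j))))"
      by (subst sum.atMost_Suc_shift) (simp add: sum.distrib distrib_right add_ac)
    have b: "(\<Sum>j\<le>i. of_nat (i choose j) * (fx (Suc i - j) * Aq (Suc j)))
       = (\<Sum>j\<le>Suc i. of_nat (i choose j) * (fx (Suc i - j) * Aq (Suc j)))"
      by simp
    have c: "(\<Sum>j\<le>Suc i. of_nat (i choose j) * (fx (Suc i - j) * Aq (Suc j)))
       = fx (Suc i) * Aq 1 + (\<Sum>j\<le>i. of_nat (i choose Suc j) * (fx (i - j) * Aq (Suc (Suc j))))"
      by (subst sum.atMost_Suc_shift) simp
    show ?thesis unfolding a b c by (simp add: add_ac)
  qed
  show ?thesis unfolding Diff_def Eop_diff T2 S P Aq_Suc[of "Suc i"] by simp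
qed

lemma Diff_zero: "Diff i = 0"
proof (induction i)
  case 0
  then show ?case by (simp add: Diff_def Aq_Suc Aq_0 fx_def Eop_def)
next
  case (Suc i)
  then show ?case by (simp add: Diff_Suc Eop_0)
qed

definition alpha :: "nat \<Rightarrow> rat" where "alpha i = (2/3) ^ i * poly (Aq i) (1/4)"

lemma poly_fx: "poly (fx m) (1/4) = (1/4) * (3/2) ^ m"
  by (simp add: fx_def)

lemma alpha_rec: "alpha (Suc i) = (1/2) * alpha i + (1/4) * (\<Sum>j\<le>i. of_nat (i choose j) * alpha (Suc j))"
proof -
  have "poly (Diff i) (1/4) = 0" by (simp add: Diff_zero)
  then have e: "poly (Aq (Suc i)) (1/4) = (3/4) * poly (Aq i) (1/4)
      + (\<Sum>j\<le>i. of_nat (i choose j) * ((1/4) * (3/2) ^ (i - j) * poly (Aq (Suc j)) (1/4)))"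
    by (simp add: Diff_def poly_sum poly_fx)
  have t: "(2/3) ^ Suc i * ((1/4) * (3/2) ^ (i - j) * poly (Aq (Suc j)) (1/4)) = (1/4) * alpha (Suc j)"
    if "j \<le> i" for j
  proof -
    have "(2/3::rat) ^ Suc i = (2/3) ^ Suc j * (2/3) ^ (i - j)"
      using that by (simp flip: power_add)
    moreover have "(2/3::rat) ^ (i - j) * (3/2) ^ (i - j) = 1"
      by (simp flip: power_mult_distrib)
    ultimately show ?thesis unfolding alpha_def by (simp add: algebra_simps)
  qed
  have "alpha (Suc i) = (2/3) ^ Suc i * poly (Aq (Suc i)) (1/4)" by (simp add: alpha_def)
  also have "\<dots> = (1/2) * alpha i + (\<Sum>j\<le>i. of_nat (i choose j) * ((1/4) * alpha (Suc j)))"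
  proof -
    have s: "(2/3) ^ Suc i * (\<Sum>j\<le>i. of_nat (i choose j) * ((1/4) * (3/2) ^ (i - j) * poly (Aq (Suc j)) (1/4)))
      = (\<Sum>j\<le>i. of_nat (i choose j) * ((1/4) * alpha (Suc j)))"
      unfolding sum_distrib_left
    proof (intro sum.cong refl)
      fix j assume "j \<in> {..i}"
      then have j: "j \<le> i" by simp
      show "(2/3) ^ Suc i * (of_nat (i choose j) * ((1/4) * (3/2) ^ (i - j) * poly (Aq (Suc j)) (1/4)))
        = of_nat (i choose j) * ((1/4) * alpha (Suc j))"
        using t[OF j] by (simp only: mult.left_commute[of "(2/3::rat) ^ Suc i"])
    qed
    show ?thesis unfolding e distrib_left s by (simp add: alpha_def)
  qed
  finally show ?thesis by (simp add: sum_distrib_left algebra_simps)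
qed

lemma alpha_0: "alpha 0 = 1" by (simp add: alpha_def Aq_0)



definition Kf :: "rat fps" where "Kf = Abs_fps (\<lambda>i. alpha i / fact i)"
abbreviation "EE \<equiv> (fps_exp 1 :: rat fps)"

lemma alpha_rec2: "4 * alpha (Suc n) = 2 * alpha n + (\<Sum>j\<le>n. of_nat (n choose j) * alpha (Suc j))"
  using alpha_rec[of n] by simp

lemma K_ode: "fps_const 4 * fps_deriv Kf - fps_deriv Kf * EE = 2 * Kf"
proof (rule fps_ext)
  fix n
  have c: "(fps_deriv Kf * EE) $ n = (\<Sum>j\<le>n. of_nat (n choose j) * alpha (Suc j)) / fact n"
  proof -
    have "(fps_deriv Kf * EE) $ n = (\<Sum>j=0..n. alpha (Suc j) / (fact j * fact (n - j)))"
      unfolding fps_mult_nth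
    proof (intro sum.cong refl)
      fix j assume "j \<in> {0..n}"
      show "fps_deriv Kf $ j * EE $ (n - j) = alpha (Suc j) / (fact j * fact (n - j))"
        by (simp add: Kf_def field_simps del: of_nat_Suc)
    qed
    also have "\<dots> = (\<Sum>j\<le>n. of_nat (n choose j) * alpha (Suc j)) / fact n"
      unfolding sum_divide_distrib atLeast0AtMost
      by (intro sum.cong refl) (simp add: binomial_fact field_simps)
    finally show ?thesis .
  qed
  have "(fps_const 4 * fps_deriv Kf - fps_deriv Kf * EE) $ n
     = (4 * alpha (Suc n) - (\<Sum>j\<le>n. of_nat (n choose j) * alpha (Suc j))) / fact n"
    unfolding fps_sub_nth c by (simp add: Kf_def field_simps del: of_nat_Suc)
  also have "\<dots> = 2 * alpha n / fact n" using alpha_rec2[of n] by simp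
  also have "\<dots> = (2 * Kf) $ n" by (simp add: Kf_def numeral_fps_const)
  finally show "(fps_const 4 * fps_deriv Kf - fps_deriv Kf * EE) $ n = (2 * Kf) $ n" .
qed

lemma K_ode2: "(fps_const 4 - EE) * fps_deriv Kf = 2 * Kf"
  using K_ode by (simp add: algebra_simps)

lemma K0: "Kf $ 0 = 1" by (simp add: Kf_def alpha_0)

lemma K_sq: "(fps_const 4 - EE) * (Kf * Kf) = fps_const 3 * EE"
proof -
  define Z where "Z = (fps_const 4 - EE) * (Kf * Kf)"
  have "fps_deriv Z = - EE * (Kf * Kf) + 2 * Kf * ((fps_const 4 - EE) * fps_deriv Kf)"
    unfolding Z_def by (simp add: algebra_simps)
  also have "\<dots> = Z" unfolding K_ode2 Z_def by (simp add: algebra_simps numeral_fps_const)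
  finally have "fps_deriv Z = fps_const 1 * Z" by simp
  then have "Z = fps_const (Z $ 0) * fps_exp 1" by (simp only: fps_exp_unique_ODE)
  moreover have "Z $ 0 = 3" unfolding Z_def by (simp add: K0)
  ultimately show ?thesis unfolding Z_def by simp
qed

definition MLf :: "rat fps" where "MLf = fps_integral Kf 0 * Kf"

lemma Lft_ode: "(fps_const 4 - EE) * fps_deriv MLf = fps_const 3 * EE + 2 * MLf"
proof -
  have "fps_deriv MLf = Kf * Kf + fps_integral Kf 0 * fps_deriv Kf"
    unfolding MLf_def by (simp add: fps_deriv_fps_integral)
  then have "(fps_const 4 - EE) * fps_deriv MLf = (fps_const 4 - EE) * (Kf * Kf) + fps_integral Kf 0 * ((fps_const 4 - EE) * fps_deriv Kf)"
    by (simp add: algebra_simps)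
  also have "\<dots> = fps_const 3 * EE + 2 * MLf" unfolding K_sq K_ode2 MLf_def by (simp add: algebra_simps)
  finally show ?thesis .
qed

lemma Lft_0: "MLf $ 0 = 0" by (simp add: MLf_def)

lemma Lft_Suc: "MLf $ Suc n = (\<Sum>i\<le>n. of_nat (Suc n choose Suc i) * (alpha i * alpha (n - i))) / fact (Suc n)"
proof -
  have "MLf $ Suc n = (\<Sum>j=0..Suc n. fps_integral Kf 0 $ j * Kf $ (Suc n - j))"
    unfolding MLf_def fps_mult_nth ..
  also have "\<dots> = (\<Sum>i=0..n. fps_integral Kf 0 $ Suc i * Kf $ (n - i))"
    by (subst sum.atLeast0_atMost_Suc_shift) simp
  also have "\<dots> = (\<Sum>i\<le>n. of_nat (Suc n choose Suc i) * (alpha i * alpha (n - i)) / fact (Suc n))"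
    unfolding atLeast0AtMost
  proof (intro sum.cong refl)
    fix i assume "i \<in> {..n}"
    then have i: "Suc i \<le> Suc n" by simp
    have c: "(of_nat (Suc n choose Suc i) :: rat) = fact (Suc n) / (fact (Suc i) * fact (n - i))"
      using binomial_fact[OF i] by simp
    have "fps_integral Kf 0 $ Suc i * Kf $ (n - i) = alpha i * alpha (n - i) / (fact (Suc i) * fact (n - i))"
      by (simp add: Kf_def fps_integral_def field_simps del: of_nat_Suc)
    also have "\<dots> = of_nat (Suc n choose Suc i) * (alpha i * alpha (n - i)) / fact (Suc n)"
      unfolding c by (simp add: field_simps del: fact_Suc)
    finally show "fps_integral Kf 0 $ Suc i * Kf $ (n - i) = of_nat (Suc n choose Suc i) * (alpha i * alpha (n - i)) / fact (Suc n)" .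
  qed
  finally show ?thesis by (simp add: sum_divide_distrib)
qed

lemma LHS_eq: "(2/3 :: rat) ^ n * poly (p_poly (int n)) (1/4) = (\<Sum>i\<le>n. of_nat (Suc n choose Suc i) * (alpha i * alpha (n - i)))"
proof -
  have "p_poly (int n) = Pp (Suc n)" by (simp add: p_poly_def Pp_def nat_add_distrib)
  then have "(2/3 :: rat) ^ n * poly (p_poly (int n)) (1/4)
     = (\<Sum>i\<le>n. (2/3) ^ n * (of_nat (Suc n choose Suc i) * (poly (Aq i) (1/4) * poly (Aq (n - i)) (1/4))))"
    by (simp add: Pp_closed poly_sum sum_distrib_left)
  also have "\<dots> = (\<Sum>i\<le>n. of_nat (Suc n choose Suc i) * (alpha i * alpha (n - i)))"
  proof (intro sum.cong refl)
    fix i assume "i \<in> {..n}"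
    then have "(2/3 :: rat) ^ n = (2/3) ^ i * (2/3) ^ (n - i)" by (simp flip: power_add)
    then show "(2/3) ^ n * (of_nat (Suc n choose Suc i) * (poly (Aq i) (1/4) * poly (Aq (n - i)) (1/4)))
       = of_nat (Suc n choose Suc i) * (alpha i * alpha (n - i))"
      by (simp add: alpha_def algebra_simps)
  qed
  finally show ?thesis .
qed



definition uu :: "rat fps" where "uu = 1 - fps_exp (-1)"
definition Gb :: "nat \<Rightarrow> rat fps" where "Gb b = polyB_gf (- int b)"
definition Cb :: "nat \<Rightarrow> rat fps" where "Cb b = Li_fps (- int b) oo uu"

lemma uu0: "uu $ 0 = 0" by (simp add: uu_def)
lemma uu1: "uu $ 1 = 1" by (simp add: uu_def)
lemma uu_nz: "uu \<noteq> 0" using uu1 by auto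
lemma uu_sub: "subdegree uu = 1"
  by (rule subdegreeI) (use uu0 uu1 in auto)

lemma E_inv: "EE * fps_exp (-1) = 1"
  by (simp flip: fps_exp_add_mult)

lemma Li_nth: "Li_fps (- int b) $ m = (if m = 0 then 0 else of_nat m ^ b)"
  by (simp add: Li_fps_def power_int_minus divide_inverse)

lemma Li_Suc: "Li_fps (- int (Suc b)) = fps_X * fps_deriv (Li_fps (- int b))"
  by (rule fps_ext) (auto simp: Li_nth simp del: of_nat_Suc)

lemma Cb0coef: "Cb b $ 0 = 0" by (simp add: Cb_def Li_nth)

lemma Cb_eq: "Cb b = Gb b * uu"
proof (cases "Cb b = 0")
  case True
  then show ?thesis by (simp add: Gb_def polyB_gf_def Cb_def uu_def)
next
  case False
  have "subdegree (Cb b) \<noteq> 0" using False Cb0coef[of b] by (simp add: subdegree_eq_0_iff)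
  then have "subdegree uu \<le> subdegree (Cb b)" by (simp add: uu_sub)
  then show ?thesis using fps_times_divide_eq[OF uu_nz] unfolding Gb_def polyB_gf_def Cb_def uu_def
    by (metis Cb_def uu_def)
qed

lemma deriv_uu: "fps_deriv uu = fps_exp (-1)"
proof -
  have m: "fps_const (-1::rat) = - 1" by (metis fps_const_neg fps_const_1_eq_1)
  have "fps_deriv uu = - (fps_const (-1) * fps_exp (-1))" by (simp add: uu_def)
  also have "\<dots> = fps_exp (-1)" unfolding m by simp
  finally show ?thesis .
qed

lemma Cb_Suc: "Cb (Suc b) = uu * EE * fps_deriv (Cb b)"
proof -
  have "Cb (Suc b) = uu * (fps_deriv (Li_fps (- int b)) oo uu)"
    unfolding Cb_def Li_Suc fps_compose_mult_distrib[OF uu0] using uu0 by simp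
  moreover have "fps_deriv (Cb b) = (fps_deriv (Li_fps (- int b)) oo uu) * fps_exp (-1)"
    unfolding Cb_def fps_compose_deriv[OF uu0] deriv_uu ..
  ultimately show ?thesis using E_inv by (simp add: algebra_simps)
qed

lemma Gb_Suc: "Gb (Suc b) = Gb b + (EE - 1) * fps_deriv (Gb b)"
proof -
  have "Gb (Suc b) * uu = uu * EE * (fps_deriv (Gb b) * uu + Gb b * fps_exp (-1))"
    using Cb_Suc[of b] unfolding Cb_eq by (simp add: algebra_simps deriv_uu)
  also have "\<dots> = (Gb b + (EE - 1) * fps_deriv (Gb b)) * uu"
    using E_inv by (simp add: uu_def algebra_simps)
  finally show ?thesis using uu_nz by simp
qed

lemma Gb_0: "Gb 0 = EE"
proof -
  have L: "(1 - fps_X) * Li_fps 0 = fps_X"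
  proof (rule fps_ext)
    fix n
    have "(1 - fps_X) * Li_fps 0 = Li_fps 0 - fps_X * Li_fps 0" by (simp add: algebra_simps)
    then show "((1 - fps_X) * Li_fps 0) $ n = fps_X $ n"
      by (cases n) (auto simp: Li_fps_def)
  qed
  have "(1 - uu) * Cb 0 = uu"
    using arg_cong[OF L, of "\<lambda>f. f oo uu"] uu0
    by (simp add: Cb_def fps_compose_mult_distrib fps_compose_sub_distrib)
  then have "fps_exp (-1) * (Gb 0 * uu) = uu" by (simp add: uu_def Cb_eq)
  then have "EE * (fps_exp (-1) * (Gb 0 * uu)) = EE * uu" by simp
  then have "Gb 0 * uu = EE * uu" using E_inv by (simp add: mult.assoc[symmetric])
  then show ?thesis using uu_nz by simp
qed

lemma Gb_nth0: "Gb b $ 0 = 1"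
  by (induction b) (simp_all add: Gb_0 Gb_Suc)

type_synonym fps2 = "rat fps fps"

definition dx :: "fps2 \<Rightarrow> fps2" where "dx P = Abs_fps (\<lambda>b. fps_deriv (P $ b))"
definition Fn :: fps2 where "Fn = Abs_fps (\<lambda>b. fps_const (1 / fact b) * Gb b)"
definition Ey :: fps2 where "Ey = Abs_fps (\<lambda>b. fps_const (1 / fact b))"
abbreviation Ex :: fps2 where "Ex \<equiv> fps_const EE"

lemma dx_nth: "dx P $ b = fps_deriv (P $ b)" by (simp add: dx_def)
lemma dx_add: "dx (P + Q) = dx P + dx Q" by (rule fps_ext) (simp add: dx_nth)
lemma dx_diff: "dx (P - Q) = dx P - dx Q" by (rule fps_ext) (simp add: dx_nth)
lemma dx_mult: "dx (P * Q) = dx P * Q + P * dx Q"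
  by (rule fps_ext) (simp add: dx_nth fps_mult_nth fps_deriv_sum sum.distrib)
lemma dx_const: "dx (fps_const c) = fps_const (fps_deriv c)"
  by (rule fps_ext) (simp add: dx_nth)
lemma dx_Ey: "dx Ey = 0" by (rule fps_ext) (simp add: dx_nth Ey_def)
lemma deriv_Ey: "fps_deriv Ey = Ey"
  by (rule fps_ext) (simp add: Ey_def fps_of_nat[symmetric] del: of_nat_Suc)

lemma Fn_R1: "fps_deriv Fn = Fn + fps_const (EE - 1) * dx Fn"
proof (rule fps_ext)
  fix b
  have "fps_deriv Fn $ b = fps_const (of_nat (Suc b) / fact (Suc b)) * Gb (Suc b)"
    by (simp add: Fn_def fps_of_nat[symmetric] del: of_nat_Suc fact_Suc)
  also have "\<dots> = fps_const (1 / fact b) * Gb (Suc b)" by simp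
  also have "\<dots> = (Fn + fps_const (EE - 1) * dx Fn) $ b"
    by (simp add: Fn_def dx_nth Gb_Suc algebra_simps)
  finally show "fps_deriv Fn $ b = (Fn + fps_const (EE - 1) * dx Fn) $ b" .
qed

definition NN :: fps2 where "NN = Ex + Ey - Ex * Ey"

lemma NF: "NN * Fn = Ex * Ey"
proof -
  define H where "H = NN * Fn - Ex * Ey"
  have dH: "fps_deriv H = fps_const (EE - 1) * dx H + fps_const (2 - EE) * H"
  proof -
    have a0: "fps_deriv H = (Ey - Ex * Ey) * Fn + NN * fps_deriv Fn - Ex * Ey"
      unfolding H_def NN_def by (simp add: deriv_Ey algebra_simps)
    have a: "fps_deriv H = (Ey - Ex * Ey) * Fn + NN * (Fn + fps_const (EE - 1) * dx Fn) - Ex * Ey"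
      unfolding a0 Fn_R1[symmetric] ..
    have b: "dx H = (Ex - Ex * Ey) * Fn + NN * dx Fn - Ex * Ey"
      unfolding H_def NN_def by (simp add: dx_mult dx_add dx_diff dx_const dx_Ey algebra_simps)
    have c1: "fps_const (EE - 1) = Ex - 1" by simp
    have c2: "fps_const (2 - EE) = 2 - Ex" by (simp add: numeral_fps_const)
    show ?thesis unfolding a b c1 c2 by (unfold H_def NN_def) algebra
  qed
  have H0: "H $ 0 = 0"
    by (simp add: H_def NN_def Fn_def Ey_def Gb_0)
  have "H $ b = 0" for b
  proof (induction b)
    case 0 then show ?case by (rule H0)
  next
    case (Suc b)
    have "fps_deriv H $ b = 0" unfolding dH using Suc by (simp add: dx_nth)
    then have "of_nat (Suc b) * H $ Suc b = 0" by simp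
    then show ?case by (metis of_nat_eq_0_iff nat.distinct(1) mult_eq_0_iff)
  qed
  then have "H = 0" by (intro fps_ext) simp
  then show ?thesis unfolding H_def by simp
qed

lemma NN_nz: "NN \<noteq> 0"
proof
  assume "NN = 0"
  then have "NN $ 0 = 0" by simp
  then show False by (simp add: NN_def Ey_def)
qed

lemma Qeq: "(2 + Ex - Ex * Ey) * fps_deriv Fn = (2 + Ex) * Fn + (Ex - 2) * dx Fn"
proof -
  have d1: "NN * fps_deriv Fn = NN * Fn - (Ey - Ex * Ey) * Fn"
  proof -
    have "fps_deriv (NN * Fn) = fps_deriv (Ex * Ey)" by (simp only: NF)
    then have "(Ey - Ex * Ey) * Fn + NN * fps_deriv Fn = Ex * Ey"
      by (simp add: NN_def deriv_Ey algebra_simps)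
    then show ?thesis using NF by (simp add: algebra_simps)
  qed
  have d2: "NN * dx Fn = NN * Fn - (Ex - Ex * Ey) * Fn"
  proof -
    have "dx (NN * Fn) = dx (Ex * Ey)" by (simp only: NF)
    then have "(Ex - Ex * Ey) * Fn + NN * dx Fn = Ex * Ey"
      by (simp add: NN_def dx_mult dx_add dx_diff dx_const dx_Ey algebra_simps)
    then show ?thesis using NF by (simp add: algebra_simps)
  qed
  have "NN * ((2 + Ex - Ex * Ey) * fps_deriv Fn - ((2 + Ex) * Fn + (Ex - 2) * dx Fn))
     = (2 + Ex - Ex * Ey) * (NN * fps_deriv Fn) - (2 + Ex) * NN * Fn - (Ex - 2) * (NN * dx Fn)"
    by (simp add: algebra_simps)
  also have "\<dots> = 0" unfolding d1 d2 by (unfold NN_def) algebra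
  finally show ?thesis using NN_nz by simp
qed

definition Lam :: "fps2 \<Rightarrow> rat fps" where
  "Lam P = Abs_fps (\<lambda>m. if m = 0 then 0 else
     (\<Sum>a\<le>m - 1. fact a * fact (m - 1 - a) * (P $ (m - 1 - a)) $ a) / fact m)"

definition ev0x :: "fps2 \<Rightarrow> rat fps" where "ev0x P = Abs_fps (\<lambda>b. (P $ b) $ 0)"

lemma Lam_0: "Lam P $ 0 = 0" by (simp add: Lam_def)
lemma Lam_Suc: "Lam P $ Suc n = (\<Sum>a\<le>n. fact a * fact (n - a) * (P $ (n - a)) $ a) / fact (Suc n)"
  by (simp add: Lam_def)

lemma deriv_Lam_nth: "fps_deriv (Lam P) $ n = (\<Sum>a\<le>n. fact a * fact (n - a) * (P $ (n - a)) $ a) / fact n"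
  by (simp add: Lam_Suc del: of_nat_Suc fact_Suc) (simp add: field_simps del: of_nat_Suc)

lemma Lam_add: "Lam (P + Q) = Lam P + Lam Q"
  by (rule fps_ext) (simp add: Lam_def sum.distrib add_divide_distrib algebra_simps)
lemma Lam_diff: "Lam (P - Q) = Lam P - Lam Q"
  by (rule fps_ext) (simp add: Lam_def sum_subtractf diff_divide_distrib algebra_simps)
lemma Lam_const: "Lam (fps_const (fps_const c) * P) = fps_const c * Lam P"
  by (rule fps_ext) (simp add: Lam_def sum_distrib_left algebra_simps)

lemma L1: "fps_deriv (Lam P) = P $ 0 + Lam (fps_deriv P)"
proof (rule fps_ext)
  fix n
  show "fps_deriv (Lam P) $ n = (P $ 0 + Lam (fps_deriv P)) $ n"
  proof (cases n)
    case 0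
    then show ?thesis by (simp add: Lam_Suc Lam_0)
  next
    case (Suc m)
    have "(\<Sum>a\<le>Suc m. fact a * fact (Suc m - a) * (P $ (Suc m - a)) $ a)
       = (\<Sum>a\<le>m. fact a * fact (Suc m - a) * (P $ (Suc m - a)) $ a) + fact (Suc m) * (P $ 0) $ Suc m"
      by simp
    also have "(\<Sum>a\<le>m. fact a * fact (Suc m - a) * (P $ (Suc m - a)) $ a)
       = (\<Sum>a\<le>m. fact a * fact (m - a) * (fps_deriv P $ (m - a)) $ a)"
    proof (intro sum.cong refl)
      fix a assume "a \<in> {..m}"
      then have a: "a \<le> m" by simp
      then have e: "Suc m - a = Suc (m - a)" by (simp add: Suc_diff_le)
      show "fact a * fact (Suc m - a) * (P $ (Suc m - a)) $ a = fact a * fact (m - a) * (fps_deriv P $ (m - a)) $ a"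
        unfolding e by (simp add: fps_of_nat[symmetric] del: of_nat_Suc)
    qed
    finally have S: "(\<Sum>a\<le>Suc m. fact a * fact (Suc m - a) * (P $ (Suc m - a)) $ a) =
      (\<Sum>a\<le>m. fact a * fact (m - a) * (fps_deriv P $ (m - a)) $ a) + fact (Suc m) * (P $ 0) $ Suc m" .
    show ?thesis unfolding deriv_Lam_nth Suc S fps_add_nth Lam_Suc
      by (simp add: add_divide_distrib del: fact_Suc)
  qed
qed

lemma L2: "fps_deriv (Lam P) = ev0x P + Lam (dx P)"
proof (rule fps_ext)
  fix n
  show "fps_deriv (Lam P) $ n = (ev0x P + Lam (dx P)) $ n"
  proof (cases n)
    case 0
    then show ?thesis by (simp add: Lam_Suc Lam_0 ev0x_def)
  next
    case (Suc m)
    have "(\<Sum>a\<le>Suc m. fact a * fact (Suc m - a) * (P $ (Suc m - a)) $ a)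
       = fact (Suc m) * (P $ Suc m) $ 0 + (\<Sum>a\<le>m. fact (Suc a) * fact (m - a) * (P $ (m - a)) $ Suc a)"
      by (subst sum.atMost_Suc_shift) simp
    also have "(\<Sum>a\<le>m. fact (Suc a) * fact (m - a) * (P $ (m - a)) $ Suc a)
       = (\<Sum>a\<le>m. fact a * fact (m - a) * (dx P $ (m - a)) $ a)"
      by (intro sum.cong refl) (simp add: dx_nth algebra_simps del: of_nat_Suc)
    finally have S: "(\<Sum>a\<le>Suc m. fact a * fact (Suc m - a) * (P $ (Suc m - a)) $ a) =
      fact (Suc m) * (P $ Suc m) $ 0 + (\<Sum>a\<le>m. fact a * fact (m - a) * (dx P $ (m - a)) $ a)" .
    show ?thesis unfolding deriv_Lam_nth Suc S fps_add_nth Lam_Suc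
      by (simp add: add_divide_distrib ev0x_def del: fact_Suc)
  qed
qed

lemma L4: "Lam (Ex * Ey * P) = EE * Lam P"
proof -
  have "\<forall>P. Lam (Ex * Ey * P) $ n = (EE * Lam P) $ n" for n
  proof (induction n)
    case 0
    then show ?case by (simp add: Lam_0)
  next
    case (Suc n)
    show ?case
    proof
      fix P
      have T0: "(Ex * Ey * P) $ 0 = EE * P $ 0" by (simp add: Ey_def)
      have dT: "fps_deriv (Ex * Ey * P) = Ex * Ey * P + Ex * Ey * fps_deriv P"
        by (simp add: deriv_Ey algebra_simps)
      have "fps_deriv (Lam (Ex * Ey * P)) $ n = (EE * P $ 0) $ n + Lam (Ex * Ey * P) $ n + Lam (Ex * Ey * fps_deriv P) $ n"
        unfolding L1 T0 dT Lam_add by simp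
      also have "\<dots> = (EE * P $ 0) $ n + (EE * Lam P) $ n + (EE * Lam (fps_deriv P)) $ n"
        using Suc.IH by simp
      also have "\<dots> = fps_deriv (EE * Lam P) $ n"
        by (simp add: L1 algebra_simps)
      finally have "fps_deriv (Lam (Ex * Ey * P)) $ n = fps_deriv (EE * Lam P) $ n" .
      then show "Lam (Ex * Ey * P) $ Suc n = (EE * Lam P) $ Suc n"
        by (simp del: of_nat_Suc fps_deriv_mult)
    qed
  qed
  then show ?thesis by (intro fps_ext) simp
qed

definition MR :: "rat fps" where "MR = Lam Fn"

lemma Fn0: "Fn $ 0 = EE" by (simp add: Fn_def Gb_0)

lemma MR_ode: "(fps_const 4 - EE) * fps_deriv MR = fps_const 3 * EE + 2 * MR"
proof -
  define Psi where "Psi = fps_const (EE - 2) * Fn"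
  have cE: "fps_const (EE - 2) = Ex - 2" by (simp add: numeral_fps_const)
  have c4: "fps_const (fps_const 4 :: rat fps) = 4" by (simp add: numeral_fps_const)
  have c2: "fps_const (fps_const 2 :: rat fps) = 2" by (simp add: numeral_fps_const)
  have dPsi: "dx Psi = Ex * Fn + (Ex - 2) * dx Fn"
    unfolding Psi_def dx_mult dx_const by (simp add: cE)
  have ePsi: "fps_deriv Psi = (Ex - 2) * fps_deriv Fn"
    unfolding Psi_def by (simp add: cE)
  have key: "fps_const (fps_const 4) * fps_deriv Fn - Ex * Ey * fps_deriv Fn - fps_const (fps_const 2) * Fn
      = dx Psi - fps_deriv Psi"
    unfolding dPsi ePsi c4 c2 using Qeq by (simp add: algebra_simps)
  have "Lam (fps_const (fps_const 4) * fps_deriv Fn - Ex * Ey * fps_deriv Fn - fps_const (fps_const 2) * Fn)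
     = fps_const 4 * Lam (fps_deriv Fn) - EE * Lam (fps_deriv Fn) - fps_const 2 * MR"
    unfolding Lam_diff Lam_const L4 MR_def ..
  moreover have "Lam (dx Psi - fps_deriv Psi) = Psi $ 0 - ev0x Psi"
    unfolding Lam_diff using L1[of Psi] L2[of Psi] by (simp add: algebra_simps)
  moreover have "Lam (fps_deriv Fn) = fps_deriv MR - EE"
    using L1[of Fn] Fn0 unfolding MR_def by simp
  moreover have "Psi $ 0 = (EE - 2) * EE" by (simp add: Psi_def Fn0)
  moreover have "ev0x Psi = - EE"
    by (rule fps_ext) (simp add: ev0x_def Psi_def Fn_def Gb_nth0)
  ultimately have "fps_const 4 * (fps_deriv MR - EE) - EE * (fps_deriv MR - EE) - fps_const 2 * MR = (EE - 2) * EE + EE"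
    using key by simp
  moreover have f4: "fps_const (4::rat) = 1 + 1 + 1 + 1" by (simp add: numeral_fps_const)
  moreover have f3: "fps_const (3::rat) = 1 + 1 + 1" by (simp add: numeral_fps_const)
  moreover have f2: "fps_const (2::rat) = 1 + 1" by (simp add: numeral_fps_const)
  ultimately show ?thesis by algebra
qed

lemma MR_0: "MR $ 0 = 0" by (simp add: MR_def Lam_0)

lemma MR_Suc: "MR $ Suc n = (\<Sum>k=0..n. polyB (n - k) (- int k)) / fact (Suc n)"
proof -
  have "MR $ Suc n = (\<Sum>a\<le>n. polyB a (- int (n - a))) / fact (Suc n)"
    unfolding MR_def Lam_Suc
    by (intro arg_cong2[where f="(/)"] sum.cong refl) (simp add: Fn_def polyB_def Gb_def)
  also have "(\<Sum>a\<le>n. polyB a (- int (n - a))) = (\<Sum>k=0..n. polyB (n - k) (- int k))"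
  proof -
    define g where "g a = polyB a (- int (n - a))" for a
    have "(\<Sum>k=0..n. polyB (n - k) (- int k)) = (\<Sum>k<Suc n. g (Suc n - Suc k))"
      unfolding atLeast0AtMost lessThan_Suc_atMost[symmetric] g_def by (intro sum.cong) auto
    also have "\<dots> = (\<Sum>k<Suc n. g k)" by (rule sum.nat_diff_reindex)
    finally show ?thesis by (simp add: lessThan_Suc_atMost g_def)
  qed
  finally show ?thesis .
qed


lemma ode_unique:
  fixes D :: "rat fps"
  assumes eq: "(fps_const 4 - EE) * fps_deriv D = 2 * D" and D0: "D $ 0 = 0"
  shows "D = 0"
proof -
  have "\<forall>m\<le>n. D $ m = 0" for n
  proof (induction n)
    case 0
    then show ?case using D0 by simp
  next
    case (Suc n)
    have z: "D $ m = 0" if "m \<le> n" for m using Suc.IH that by simp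
    have s: "(EE * fps_deriv D) $ n = of_nat (Suc n) * D $ Suc n"
    proof -
      have "(EE * fps_deriv D) $ n = (\<Sum>i=0..n. EE $ i * fps_deriv D $ (n - i))"
        by (rule fps_mult_nth)
      also have "\<dots> = EE $ 0 * fps_deriv D $ n + (\<Sum>i=Suc 0..n. EE $ i * fps_deriv D $ (n - i))"
        by (subst sum.atLeast_Suc_atMost) simp_all
      also have "(\<Sum>i=Suc 0..n. EE $ i * fps_deriv D $ (n - i)) = 0"
        by (intro sum.neutral ballI) (auto simp: z simp del: of_nat_Suc)
      finally show ?thesis by (simp del: of_nat_Suc)
    qed
    have "((fps_const 4 - EE) * fps_deriv D) $ n = (2 * D) $ n" using eq by simp
    then have "4 * (of_nat (Suc n) * D $ Suc n) - of_nat (Suc n) * D $ Suc n = 2 * D $ n"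
      using s by (simp add: algebra_simps numeral_fps_const del: of_nat_Suc)
    then have "3 * (of_nat (Suc n) * D $ Suc n) = 0" using z[of n] by simp
    then have "D $ Suc n = 0" by simp
    then show ?case using z le_Suc_eq by auto
  qed
  then show ?thesis by (intro fps_ext) auto
qed

theorem theorem3p5:
  fixes n :: nat
  shows "(2/3 :: rat) ^ n * poly (p_poly (int n)) (1/4) = (\<Sum>k=0..n. polyB (n - k) (- int k))"
proof -
  have "MLf - MR = 0"
  proof (rule ode_unique)
    show "(fps_const 4 - EE) * fps_deriv (MLf - MR) = 2 * (MLf - MR)"
      using Lft_ode MR_ode by (simp add: algebra_simps)
    show "(MLf - MR) $ 0 = 0" by (simp add: Lft_0 MR_0)
  qed
  then have "MLf $ Suc n = MR $ Suc n" by simp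
  then have "(\<Sum>i\<le>n. of_nat (Suc n choose Suc i) * (alpha i * alpha (n - i))) = (\<Sum>k=0..n. polyB (n - k) (- int k))"
    unfolding Lft_Suc MR_Suc by (simp del: fact_Suc)
  then show ?thesis using LHS_eq by simp
qed

end
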